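(* Let $\mathbf V=(V,\pi)$ be a persistence module of finite type over $\mathbb Z/2$, and assume that the barcode of $\mathbf V$ contains a bar of the form $(a,b]$ or of the form $(a,\infty)$; in the latter case set $b=\infty$. Then for every $\delta>0$ there exists $x\in V_{a+\delta}$ such that: (i) $\pi_{a+\delta,s}\,x\neq0$ for all $s$ with $a+\delta\le s\le b$; (ii) for all $s$ with $a+\delta\le s\le b$ and all $\sigma\le a$, $\pi_{a+\delta,s}\,x\notin\operatorname{im}\pi_{\sigma,s}$.
   Context: A persistence module $\mathbf V$ consists of finite-dimensional $\mathbb Z/2$-vector spaces $V_t$, $t\in\mathbb R$, and linear maps $\pi_{s,t}:V_s\to V_t$ for $s\le t$ with $\pi_{t,t}=\mathrm{Id}$ and $\pi_{s,t}=\pi_{r,t}\circ\pi_{s,r}$ for $s\le r\le t$. It is of finite type if there is a discrete closed set $\operatorname{spec}(\mathbf V)=\{t_0<t_1<\dots\}$ with $t_0>-\infty$ such that $\pi_{s,t}$ is an isomorphism for $s\le t$ in a neighborhood of any point outside the spectrum, and for $s\le t$ in $(r-\epsilon,r]$ for each spectral point $r$ and some $\epsilon>0$, and $V_t=0$ for $t\le t_0$. For an interval $\mathbb J$ of the form $(a,b]$ or $(a,\infty)$, the interval module $\mathbf Q(\mathbb J)$ has $Q_t=\mathbb Z/2$ for $t\in\mathbb J$, $0$ otherwise, with $\pi_{s,t}=\mathrm{Id}$ for $s,t\in\mathbb J$ and $0$ otherwise. By the structure theorem, a finite-type module is isomorphic to $\bigoplus_j\mathbf Q(\mathbb J_j)$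 for a unique multiset of intervals (each appearing finitely often), its barcode. *)

theory Defs
  imports "HOL-Library.Z2" "HOL-Library.Extended_Real"
begin

text \<open>A persistence module over Z/2 is modelled as a family of subspaces V t of an
ambient Z/2-vector space (type 'v with scalar multiplication scale by bit = Z/2),
together with maps \<pi> s t (meaningful for s \<le> t) that are linear from V s to V t.\<close>

definition persistence_module ::
  "(bit \<Rightarrow> 'v::ab_group_add \<Rightarrow> 'v) \<Rightarrow> (real \<Rightarrow> 'v set) \<Rightarrow> (real \<Rightarrow> real \<Rightarrow> 'v \<Rightarrow> 'v) \<Rightarrow> bool"
where
  "persistence_module scale V \<pi> \<longleftrightarrow>
     vector_space scale \<and>
     (\<forall>t. module.subspace scale (V t) \<and>
          (\<exists>B. finite B \<and> B \<subseteq> V t \<and> module.span scale B = V t)) \<and>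
     (\<forall>s t. s \<le> t \<longrightarrow>
          \<pi> s t ` V s \<subseteq> V t \<and>
          (\<forall>x\<in>V s. \<forall>y\<in>V s. \<pi> s t (x + y) = \<pi> s t x + \<pi> s t y) \<and>
          (\<forall>c. \<forall>x\<in>V s. \<pi> s t (scale c x) = scale c (\<pi> s t x))) \<and>
     (\<forall>t. \<forall>x\<in>V t. \<pi> t t x = x) \<and>
     (\<forall>s r t. \<forall>x\<in>V s. s \<le> r \<longrightarrow> r \<le> t \<longrightarrow> \<pi> s t x = \<pi> r t (\<pi> s r x))"

definition pm_iso_on :: "(real \<Rightarrow> 'v set) \<Rightarrow> (real \<Rightarrow> real \<Rightarrow> 'v \<Rightarrow> 'v) \<Rightarrow> real \<Rightarrow> real \<Rightarrow> bool"
  where "pm_iso_on V \<pi> s t \<longleftrightarrow> bij_betw (\<pi> s t) (V s) (V t)"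

definition finite_type ::
  "(real \<Rightarrow> 'v::ab_group_add set) \<Rightarrow> (real \<Rightarrow> real \<Rightarrow> 'v \<Rightarrow> 'v) \<Rightarrow> bool"
where
  "finite_type V \<pi> \<longleftrightarrow>
     (\<exists>S t0. t0 \<in> S \<and> (\<forall>s\<in>S. t0 \<le> s) \<and> (\<forall>r. finite {s\<in>S. s \<le> r}) \<and>
        (\<forall>r. r \<notin> S \<longrightarrow> (\<exists>e>0. \<forall>s t. r - e < s \<longrightarrow> s \<le> t \<longrightarrow> t < r + e \<longrightarrow> pm_iso_on V \<pi> s t)) \<and>
        (\<forall>r\<in>S. \<exists>e>0. \<forall>s t. r - e < s \<longrightarrow> s \<le> t \<longrightarrow> t \<le> r \<longrightarrow> pm_iso_on V \<pi> s t) \<and>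
        (\<forall>t. t \<le> t0 \<longrightarrow> V t = {0}))"

text \<open>Intervals (a,b] (b real) or (a,\<infinity>) (b = \<infinity>), encoded as a pair (a,b) with b::ereal.\<close>

definition ival :: "real \<times> ereal \<Rightarrow> real set"
  where "ival I = {t. fst I < t \<and> ereal t \<le> snd I}"

text \<open>Direct sum of interval modules Q(I j), j \<in> J, with Z/2 coefficients.\<close>

definition bsum_space :: "nat set \<Rightarrow> (nat \<Rightarrow> real \<times> ereal) \<Rightarrow> real \<Rightarrow> (nat \<Rightarrow> bit) set"
  where "bsum_space J I t = {f. \<forall>j. f j \<noteq> 0 \<longrightarrow> j \<in> J \<and> t \<in> ival (I j)}"

definition bsum_map :: "(nat \<Rightarrow> real \<times> ereal) \<Rightarrow> real \<Rightarrow> real \<Rightarrow> (nat \<Rightarrow> bit) \<Rightarrow> (nat \<Rightarrow> bit)"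
  where "bsum_map I s t f = (\<lambda>j. if s \<in> ival (I j) \<and> t \<in> ival (I j) then f j else 0)"

definition barcode_decomposition ::
  "(bit \<Rightarrow> 'v::ab_group_add \<Rightarrow> 'v) \<Rightarrow> (real \<Rightarrow> 'v set) \<Rightarrow> (real \<Rightarrow> real \<Rightarrow> 'v \<Rightarrow> 'v)
   \<Rightarrow> nat set \<Rightarrow> (nat \<Rightarrow> real \<times> ereal) \<Rightarrow> bool"
where
  "barcode_decomposition scale V \<pi> J I \<longleftrightarrow>
     (\<forall>j\<in>J. ereal (fst (I j)) < snd (I j)) \<and>
     (\<exists>phi :: real \<Rightarrow> 'v \<Rightarrow> (nat \<Rightarrow> bit).
        (\<forall>t. bij_betw (phi t) (V t) (bsum_space J I t)) \<and>
        (\<forall>t. \<forall>x\<in>V t. \<forall>y\<in>V t. phi t (x + y) = (\<lambda>j. phi t x j + phi t y j)) \<and>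
        (\<forall>t c. \<forall>x\<in>V t. phi t (scale c x) = (\<lambda>j. c * phi t x j)) \<and>
        (\<forall>s t. s \<le> t \<longrightarrow> (\<forall>x\<in>V s. phi t (\<pi> s t x) = bsum_map I s t (phi s x))))"

definition has_bar ::
  "(bit \<Rightarrow> 'v::ab_group_add \<Rightarrow> 'v) \<Rightarrow> (real \<Rightarrow> 'v set) \<Rightarrow> (real \<Rightarrow> real \<Rightarrow> 'v \<Rightarrow> 'v)
   \<Rightarrow> real \<Rightarrow> ereal \<Rightarrow> bool"
where
  "has_bar scale V \<pi> a b \<longleftrightarrow>
     (\<exists>J I. barcode_decomposition scale V \<pi> J I \<and> (\<exists>j\<in>J. I j = (a, b)))"

end

theory Submission
  imports Defs
begin

theorem lemma3p4:
  fixes scale :: "bit \<Rightarrow> 'v::ab_group_add \<Rightarrow> 'v"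
    and V :: "real \<Rightarrow> 'v set" and \<pi> :: "real \<Rightarrow> real \<Rightarrow> 'v \<Rightarrow> 'v"
    and a :: real and b :: ereal and \<delta> :: real
  assumes "persistence_module scale V \<pi>"
    and "finite_type V \<pi>"
    and "has_bar scale V \<pi> a b"
    and "\<delta> > 0"
  shows "\<exists>x\<in>V (a + \<delta>).
           (\<forall>s. a + \<delta> \<le> s \<and> ereal s \<le> b \<longrightarrow> \<pi> (a + \<delta>) s x \<noteq> 0) \<and>
           (\<forall>s \<sigma>. a + \<delta> \<le> s \<and> ereal s \<le> b \<and> \<sigma> \<le> a \<longrightarrow> \<pi> (a + \<delta>) s x \<notin> \<pi> \<sigma> s ` V \<sigma>)"
proof -
  have maps: "\<And>s t x. s \<le> t \<Longrightarrow> x \<in> V s \<Longrightarrow> \<pi> s t x \<in> V t"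
    using assms(1) unfolding persistence_module_def by blast
  obtain J I j where jJ: "j \<in> J" and Ij: "I j = (a, b)" and
    bd: "barcode_decomposition scale V \<pi> J I"
    using assms(3) unfolding has_bar_def by blast
  then obtain phi :: "real \<Rightarrow> 'v \<Rightarrow> (nat \<Rightarrow> bit)" where
    bij: "\<And>t. bij_betw (phi t) (V t) (bsum_space J I t)" and
    add: "\<And>t x y. x \<in> V t \<Longrightarrow> y \<in> V t \<Longrightarrow> phi t (x + y) = (\<lambda>j. phi t x j + phi t y j)" and
    nat: "\<And>s t x. s \<le> t \<Longrightarrow> x \<in> V s \<Longrightarrow> phi t (\<pi> s t x) = bsum_map I s t (phi s x)"
    unfolding barcode_decomposition_def by metis
  let ?t = "a + \<delta>"
  show ?thesis
  proof (cases "ereal ?t \<le> b")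
    case False
    have "(\<lambda>_. 0) \<in> bsum_space J I ?t" unfolding bsum_space_def by simp
    then have "\<exists>x\<in>V ?t. phi ?t x = (\<lambda>_. 0)"
      using bij[of ?t] unfolding bij_betw_def by (metis imageE)
    then obtain x where "x \<in> V ?t" by blast
    then show ?thesis using False
      by (meson order_trans ereal_less_eq(3))
  next
    case True
    define e where "e = (\<lambda>i. if i = j then (1::bit) else 0)"
    have "e \<in> bsum_space J I ?t"
      unfolding bsum_space_def e_def ival_def using jJ Ij True assms(4) by auto
    then obtain x where xV: "x \<in> V ?t" and ex: "phi ?t x = e"
      using bij[of ?t] unfolding bij_betw_def by (metis imageE)
    have val: "phi s (\<pi> ?t s x) j = 1" if "?t \<le> s" "ereal s \<le> b" for s
      using nat[OF that(1) xV] ex that assms(4) Ij True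
      by (simp add: bsum_map_def e_def ival_def)
    have i: "\<pi> ?t s x \<noteq> 0" if "?t \<le> s" "ereal s \<le> b" for s
    proof
      assume z: "\<pi> ?t s x = 0"
      have m: "\<pi> ?t s x \<in> V s" using maps[OF that(1) xV] .
      have "phi s (\<pi> ?t s x + \<pi> ?t s x) = (\<lambda>i. phi s (\<pi> ?t s x) i + phi s (\<pi> ?t s x) i)"
        using add[OF m m] .
      then have "phi s (\<pi> ?t s x) j = phi s (\<pi> ?t s x) j + phi s (\<pi> ?t s x) j"
        using z by (metis add.right_neutral)
      then show False using val[OF that] by simp
    qed
    have ii: "\<pi> ?t s x \<notin> \<pi> \<sigma> s ` V \<sigma>" if "?t \<le> s" "ereal s \<le> b" "\<sigma> \<le> a" for s \<sigma>
    proof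
      assume "\<pi> ?t s x \<in> \<pi> \<sigma> s ` V \<sigma>"
      then obtain y where y: "y \<in> V \<sigma>" "\<pi> ?t s x = \<pi> \<sigma> s y" by blast
      have "\<sigma> \<le> s" using that assms(4) by simp
      have "phi s (\<pi> \<sigma> s y) j = 0"
        using nat[OF \<open>\<sigma> \<le> s\<close> y(1)] that Ij by (simp add: bsum_map_def ival_def)
      then show False using val[OF that(1,2)] y(2) by simp
    qed
    show ?thesis using xV i ii by blast
  qed
qed

end
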